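(* Let $\mathcal{X}$ be an instance space and $\mathcal{Y}$ a finite label set. Let $\hat f:\mathcal{X}\to\mathbb{P}(\mathcal{Y})$ be a fixed probabilistic classifier (independent of the data below), writing $\hat f(x)_y$ for the probability of label $y$ at $x$. Let $(x_j,y_j)$, $j\in\mathcal{I}_2$, be calibration points, each observed only through a candidate set $S_j\subseteq\mathcal{Y}$ with $y_j\in S_j$, and let $(x_{new},y_{new})$ be a test point. Define the multiset $$\mathcal{E}_{\mathrm{mean}}:=\Big\{\,1-\frac{\sum_{y\in S_j}\hat f(x_j)_y}{|S_j|}: j\in\mathcal{I}_2\Big\}.$$ If the points $\{(x_j,y_j):j\in\mathcal{I}_2\}\cup\{(x_{new},y_{new})\}$ are exchangeable and $\hat f(x_j)_{y_j}\ge 1/|S_j|$ for all $j\in\mathcal{I}_2$ (with probability one), then for every $\epsilon\in(0,1]$, $$\mathbb{P}\big(y_{new}\in\mathcal{T}(x_{new},\hat f,\mathcal{E}_{\mathrm{mean}},\epsilon)\big)\ge 1-\epsilon .$$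
   Context: For a finite multiset $\mathcal{E}$ of real numbers and $\epsilon\in(0,1]$, the critical score $q(\mathcal{E},\epsilon)$ is the $\lceil(1+|\mathcal{E}|)(1-\epsilon)\rceil$-th smallest element of $\mathcal{E}$ (counted with multiplicity); if this index exceeds $|\mathcal{E}|$, $q(\mathcal{E},\epsilon)$ is taken to be $+\infty$. For $x\in\mathcal{X}$, the prediction set is $\mathcal{T}(x,\hat f,\mathcal{E},\epsilon):=\{y\in\mathcal{Y}:\hat f(x)_y\ge 1-q(\mathcal{E},\epsilon)\}$. "Valid" means the coverage bound $\mathbb{P}(y_{new}\in\mathcal{T})\ge 1-\epsilon$. *)

theory Defs
  imports "HOL-Probability.Probability" "HOL-Combinatorics.Permutations" "HOL-Library.Multiset"
begin

definition critical_score :: "real multiset \<Rightarrow> real \<Rightarrow> ereal" where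
  "critical_score E eps =
     (let k = nat \<lceil>(1 + real (size E)) * (1 - eps)\<rceil>
      in if k > size E then \<infinity> else ereal (sorted_list_of_multiset E ! (k - 1)))"

definition pred_set :: "'x \<Rightarrow> ('x \<Rightarrow> 'y \<Rightarrow> real) \<Rightarrow> real multiset \<Rightarrow> real \<Rightarrow> 'y set" where
  "pred_set x f E eps = {y. ereal (f x y) \<ge> 1 - critical_score E eps}"

definition exchangeable :: "'w measure \<Rightarrow> 'b measure \<Rightarrow> nat set \<Rightarrow> (nat \<Rightarrow> 'w \<Rightarrow> 'b) \<Rightarrow> bool" where
  "exchangeable M N I Z \<longleftrightarrow>
     (\<forall>\<pi>. \<pi> permutes I \<longrightarrow>
        distr M (PiM I (\<lambda>_. N)) (\<lambda>\<omega>. \<lambda>i\<in>I. Z (\<pi> i) \<omega>) =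
        distr M (PiM I (\<lambda>_. N)) (\<lambda>\<omega>. \<lambda>i\<in>I. Z i \<omega>))"

definition E_mean :: "nat \<Rightarrow> ('x \<Rightarrow> 'y \<Rightarrow> real) \<Rightarrow> (nat \<Rightarrow> 'x) \<Rightarrow> (nat \<Rightarrow> 'y set) \<Rightarrow> real multiset" where
  "E_mean n f x S = image_mset (\<lambda>j. 1 - (\<Sum>y\<in>S j. f (x j) y) / real (card (S j))) (mset_set {..<n})"

end

theory Submission
  imports Defs
begin

lemma sorted_nth_ge_iff:
  fixes xs :: "real list"
  assumes "sorted xs" "1 \<le> k" "k \<le> length xs"
  shows "(u \<le> xs ! (k - 1)) \<longleftrightarrow> length (filter (\<lambda>x. x < u) xs) < k"
proof
  assume h: "u \<le> xs ! (k - 1)"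
  have "\<forall>x\<in>set (drop (k - 1) xs). u \<le> x"
  proof
    fix x assume "x \<in> set (drop (k - 1) xs)"
    then obtain i where i: "i < length (drop (k-1) xs)" "x = drop (k-1) xs ! i"
      by (metis in_set_conv_nth)
    then have "x = xs ! (k - 1 + i)" using assms by simp
    moreover have "xs ! (k-1) \<le> xs ! (k - 1 + i)"
      using assms i by (intro sorted_nth_mono) auto
    ultimately show "u \<le> x" using h by simp
  qed
  then have "filter (\<lambda>x. x < u) (drop (k - 1) xs) = []"
    by (auto simp: filter_empty_conv)
  then have "length (filter (\<lambda>x. x < u) xs) = length (filter (\<lambda>x. x < u) (take (k-1) xs))"
    by (metis append_take_drop_id filter_append append_Nil2)
  also have "\<dots> \<le> k - 1" using length_filter_le[of _ "take (k-1) xs"] by (metis length_take min.bounded_iff order.trans order_refl nat_le_linear min_def)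
  finally show "length (filter (\<lambda>x. x < u) xs) < k" using assms by linarith
next
  assume h: "length (filter (\<lambda>x. x < u) xs) < k"
  show "u \<le> xs ! (k - 1)"
  proof (rule ccontr)
    assume "\<not> u \<le> xs ! (k - 1)"
    then have c: "xs ! (k-1) < u" by simp
    have "\<forall>x\<in>set (take k xs). x < u"
    proof
      fix x assume "x \<in> set (take k xs)"
      then obtain i where i: "i < length (take k xs)" "x = take k xs ! i"
        by (metis in_set_conv_nth)
      then have "x = xs ! i" "i \<le> k - 1" using assms by auto
      moreover have "xs ! i \<le> xs ! (k-1)"
        using assms i by (intro sorted_nth_mono) auto
      ultimately show "x < u" using c by simp
    qed
    then have "filter (\<lambda>x. x < u) (take k xs) = take k xs" by simp
    then have "length (filter (\<lambda>x. x < u) xs) \<ge> k"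
      by (metis append_take_drop_id filter_append length_append le_add1 length_take min_absorb2 assms(3))
    with h show False by simp
  qed
qed

lemma card_filter_mset:
  fixes n :: nat
  shows   "size (filter_mset P (image_mset e (mset_set {..<n}))) = card {j\<in>{..<n}. P (e j)}"
proof -
  have "filter_mset (\<lambda>x. P (e x)) (mset_set {..<n}) = mset_set {j\<in>{..<n}. P (e j)}"
    by (rule filter_mset_mset_set) simp
  then show ?thesis by (simp add: filter_mset_image_mset del: filter_mset_mset_set)
qed

lemma ereal_one_minus_le: "(1 - ereal a \<le> ereal t) \<longleftrightarrow> (1 - t \<le> a)"
proof -
  have "(1::ereal) - ereal a = ereal (1 - a)" by (simp add: one_ereal_def)
  then show ?thesis by auto
qed

lemma crit_iff:
  fixes e :: "nat \<Rightarrow> real" and n k :: nat and eps t :: real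
  assumes k_def: "k = nat \<lceil>(1 + real n) * (1 - eps)\<rceil>"
  assumes "1 \<le> k" "k \<le> n"
  shows "(ereal t \<ge> 1 - critical_score (image_mset e (mset_set {..<n})) eps)
     \<longleftrightarrow> card {j\<in>{..<n}. e j < 1 - t} < k"
proof -
  let ?E = "image_mset e (mset_set {..<n})"
  let ?xs = "sorted_list_of_multiset ?E"
  have sz: "size ?E = n" by simp
  have len: "length ?xs = n" by (metis mset_sorted_list_of_multiset size_mset sz)
  have cs0: "critical_score ?E eps = (if k > n then \<infinity> else ereal (?xs ! (k - 1)))"
    unfolding critical_score_def Let_def sz k_def[symmetric] by simp
  have cs: "critical_score ?E eps = ereal (?xs ! (k - 1))"
    using assms(3) unfolding cs0 by simp
  have "(ereal t \<ge> 1 - critical_score ?E eps) \<longleftrightarrow> 1 - t \<le> ?xs ! (k - 1)"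
    unfolding cs by (rule ereal_one_minus_le)
  also have "\<dots> \<longleftrightarrow> length (filter (\<lambda>x. x < 1 - t) ?xs) < k"
    using assms(2,3) len by (intro sorted_nth_ge_iff) simp_all
  also have "length (filter (\<lambda>x. x < 1 - t) ?xs) = size (filter_mset (\<lambda>x. x < 1 - t) ?E)"
    by (metis mset_filter mset_sorted_list_of_multiset size_mset)
  also have "\<dots> = card {j\<in>{..<n}. e j < 1 - t}" by (rule card_filter_mset)
  finally show ?thesis .
qed

lemma count_bound:
  fixes v :: "nat \<Rightarrow> real"
  assumes "finite I" "{i\<in>I. k \<le> card {j\<in>I. v j < v i}} \<noteq> {}"
  shows "card {i\<in>I. k \<le> card {j\<in>I. v j < v i}} + k \<le> card I"
proof -
  let ?B = "{i\<in>I. k \<le> card {j\<in>I. v j < v i}}"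
  have fB: "finite ?B" using assms by simp
  define i0 where "i0 = arg_min_on v ?B"
  have i0: "i0 \<in> ?B" "\<forall>i\<in>?B. v i0 \<le> v i"
    unfolding i0_def using arg_min_if_finite(1)[OF fB assms(2)] arg_min_least[OF fB assms(2)] by auto
  let ?L = "{j\<in>I. v j < v i0}"
  have disj: "?L \<inter> ?B = {}" using i0 by force
  have "card ?B + k \<le> card ?B + card ?L" using i0 by simp
  also have "\<dots> = card (?B \<union> ?L)" using disj assms(1)
    by (subst card_Un_disjoint) auto
  also have "\<dots> \<le> card I" using assms(1) by (intro card_mono) auto
  finally show ?thesis .
qed

lemma card_perm:
  assumes "p permutes I"
  shows "card {j\<in>I. P (p j)} = card {j\<in>I. P j}"
proof -
  have "p ` {j\<in>I. P (p j)} = {j\<in>I. P j}"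
  proof
    show "p ` {j\<in>I. P (p j)} \<subseteq> {j\<in>I. P j}" using assms by (auto simp: permutes_in_image)
    show "{j\<in>I. P j} \<subseteq> p ` {j\<in>I. P (p j)}"
    proof
      fix j assume j: "j \<in> {j\<in>I. P j}"
      have "inv p j \<in> I" using j assms by (simp add: permutes_inv permutes_in_image)
      moreover have "p (inv p j) = j" using assms by (simp add: permutes_inverses(1))
      ultimately show "j \<in> p ` {j\<in>I. P (p j)}" using j by (metis (mono_tags, lifting) image_eqI mem_Collect_eq)
    qed
  qed
  moreover have "inj_on p {j\<in>I. P (p j)}"
    using permutes_inj[OF assms] by (meson inj_on_subset subset_UNIV)
  ultimately show ?thesis by (metis card_image)
qed


lemma mean_le:
  fixes f :: "'x \<Rightarrow> 'y::finite \<Rightarrow> real"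
  assumes nn: "\<And>x y. f x y \<ge> 0" and sm: "\<And>x. (\<Sum>y\<in>UNIV. f x y) = 1"
    and y: "y \<in> s" and lb: "1 / real (card s) \<le> f x y"
  shows "(\<Sum>z\<in>s. f x z) / real (card s) \<le> f x y"
proof -
  have cpos: "real (card s) > 0" using y by (auto simp: card_gt_0_iff)
  have "(\<Sum>z\<in>s. f x z) \<le> (\<Sum>z\<in>UNIV. f x z)"
    by (rule sum_mono2) (auto simp: nn)
  then have "(\<Sum>z\<in>s. f x z) \<le> 1" using sm by simp
  then have "(\<Sum>z\<in>s. f x z) / real (card s) \<le> 1 / real (card s)"
    using cpos by (simp add: divide_right_mono)
  with lb show ?thesis by linarith
qed

lemma card_pred_meas:
  fixes A :: "'i set"
  assumes "finite A" "\<And>j. j \<in> A \<Longrightarrow> {\<omega>\<in>space M. P j \<omega>} \<in> sets M"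
  shows "(\<lambda>\<omega>. real (card {j\<in>A. P j \<omega>})) \<in> borel_measurable M"
proof -
  have "(\<lambda>\<omega>. \<Sum>j\<in>A. indicator {\<omega>\<in>space M. P j \<omega>} \<omega> :: real) \<in> borel_measurable M"
    using assms(2) by (intro borel_measurable_sum borel_measurable_indicator) auto
  moreover have "\<And>\<omega>. \<omega> \<in> space M \<Longrightarrow> (\<Sum>j\<in>A. indicator {\<omega>\<in>space M. P j \<omega>} \<omega> :: real) = real (card {j\<in>A. P j \<omega>})"
  proof -
    fix \<omega> assume "\<omega> \<in> space M"
    then have "(\<Sum>j\<in>A. indicator {\<omega>\<in>space M. P j \<omega>} \<omega> :: real) = (\<Sum>j\<in>A. of_bool (P j \<omega>))"
      by (intro sum.cong) (auto simp: indicator_def)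
    also have "\<dots> = real (card (A \<inter> {j. P j \<omega>}))"
      using assms(1) by simp
    also have "A \<inter> {j. P j \<omega>} = {j\<in>A. P j \<omega>}" by blast
    finally show "(\<Sum>j\<in>A. indicator {\<omega>\<in>space M. P j \<omega>} \<omega> :: real) = real (card {j\<in>A. P j \<omega>})" .
  qed
  ultimately show ?thesis using measurable_cong[of M "\<lambda>\<omega>. real (card {j\<in>A. P j \<omega>})" "\<lambda>\<omega>. \<Sum>j\<in>A. indicator {\<omega>\<in>space M. P j \<omega>} \<omega> :: real" borel]
    by simp
qed

lemma card_pred_sets:
  fixes A :: "'i set"
  assumes "finite A" "\<And>j. j \<in> A \<Longrightarrow> {\<omega>\<in>space M. P j \<omega>} \<in> sets M"
  shows "{\<omega>\<in>space M. k \<le> card {j\<in>A. P j \<omega>}} \<in> sets M"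
    and "{\<omega>\<in>space M. card {j\<in>A. P j \<omega>} < k} \<in> sets M"
proof -
  have h[measurable]: "(\<lambda>\<omega>. real (card {j\<in>A. P j \<omega>})) \<in> borel_measurable M"
    by (rule card_pred_meas[OF assms])
  have "{\<omega>\<in>space M. real k \<le> real (card {j\<in>A. P j \<omega>})} \<in> sets M" by measurable
  then show "{\<omega>\<in>space M. k \<le> card {j\<in>A. P j \<omega>}} \<in> sets M" by simp
  have "{\<omega>\<in>space M. real (card {j\<in>A. P j \<omega>}) < real k} \<in> sets M" by measurable
  then show "{\<omega>\<in>space M. card {j\<in>A. P j \<omega>} < k} \<in> sets M" by simp
qed

theorem theorem3:
  fixes M :: "'w measure" and MX :: "'x measure"
    and f :: "'x \<Rightarrow> 'y::finite \<Rightarrow> real"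
    and X :: "nat \<Rightarrow> 'w \<Rightarrow> 'x" and Y :: "nat \<Rightarrow> 'w \<Rightarrow> 'y"
    and S :: "nat \<Rightarrow> 'w \<Rightarrow> 'y set"
    and n :: nat and \<epsilon> :: real
  assumes "prob_space M"
    and f_nonneg: "\<And>x y. f x y \<ge> 0"
    and f_sum: "\<And>x. (\<Sum>y\<in>UNIV. f x y) = 1"
    and f_meas: "\<And>y. (\<lambda>x. f x y) \<in> borel_measurable MX"
    and XY_meas: "\<And>i. i \<le> n \<Longrightarrow> (\<lambda>\<omega>. (X i \<omega>, Y i \<omega>)) \<in> M \<rightarrow>\<^sub>M MX \<Otimes>\<^sub>M count_space UNIV"
    and S_meas: "\<And>j. j < n \<Longrightarrow> S j \<in> M \<rightarrow>\<^sub>M count_space UNIV"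
    and exch: "exchangeable M (MX \<Otimes>\<^sub>M count_space UNIV) {..n} (\<lambda>i \<omega>. (X i \<omega>, Y i \<omega>))"
    and cand: "AE \<omega> in M. \<forall>j<n. Y j \<omega> \<in> S j \<omega>"
    and lower: "AE \<omega> in M. \<forall>j<n. f (X j \<omega>) (Y j \<omega>) \<ge> 1 / real (card (S j \<omega>))"
    and eps: "0 < \<epsilon>" "\<epsilon> \<le> 1"
  shows "measure M {\<omega> \<in> space M.
           Y n \<omega> \<in> pred_set (X n \<omega>) f (E_mean n f (\<lambda>j. X j \<omega>) (\<lambda>j. S j \<omega>)) \<epsilon>}
         \<ge> 1 - \<epsilon>"
proof -
  interpret P: prob_space M by fact
  define k where "k = nat \<lceil>(1 + real n) * (1 - \<epsilon>)\<rceil>"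
  define N where "N = MX \<Otimes>\<^sub>M (count_space UNIV :: 'y measure)"
  define I where "I = {..n}"
  define Z where "Z = (\<lambda>i \<omega>. (X i \<omega>, Y i \<omega>))"
  define g where "g = (\<lambda>p::'x \<times> 'y. 1 - f (fst p) (snd p))"
  define r where "r = (\<lambda>i \<omega>. g (Z i \<omega>))"
  define e where "e = (\<lambda>j \<omega>. 1 - (\<Sum>y\<in>S j \<omega>. f (X j \<omega>) y) / real (card (S j \<omega>)))"
  define T where "T = {\<omega> \<in> space M.
           Y n \<omega> \<in> pred_set (X n \<omega>) f (E_mean n f (\<lambda>j. X j \<omega>) (\<lambda>j. S j \<omega>)) \<epsilon>}"
  have Eeq: "E_mean n f (\<lambda>j. X j \<omega>) (\<lambda>j. S j \<omega>) = image_mset (\<lambda>j. e j \<omega>) (mset_set {..<n})" for \<omega>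
    unfolding E_mean_def e_def by simp
  have Tiff: "\<omega> \<in> T \<longleftrightarrow> \<omega> \<in> space M \<and> ereal (f (X n \<omega>) (Y n \<omega>)) \<ge> 1 - critical_score (image_mset (\<lambda>j. e j \<omega>) (mset_set {..<n})) \<epsilon>" for \<omega>
    unfolding T_def pred_set_def Eeq by simp
  show ?thesis
  proof (cases "\<epsilon> = 1")
    case True
    then show ?thesis by simp
  next
    case False
    then have eps1: "\<epsilon> < 1" using eps by simp
    have kge: "real k \<ge> (1 + real n) * (1 - \<epsilon>)" unfolding k_def by linarith
    have k1: "k \<ge> 1"
    proof -
      have "(1 + real n) * (1 - \<epsilon>) > 0" using eps1 by simp
      then show ?thesis unfolding k_def by linarith
    qed
    show ?thesis
    proof (cases "k > n")
      case True
      have "T = space M"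
      proof -
        have "critical_score (image_mset (\<lambda>j. e j \<omega>) (mset_set {..<n})) \<epsilon> = \<infinity>" for \<omega>
          unfolding critical_score_def Let_def using True k_def by simp
        moreover have "(1::ereal) - \<infinity> = -\<infinity>" by (simp add: one_ereal_def)
        ultimately show ?thesis using Tiff by auto
      qed
      then show ?thesis unfolding T_def[symmetric] using eps by (simp add: P.prob_space)
    next
      case False
      then have kn: "k \<le> n" by simp
      have fin: "finite I" unfolding I_def by simp
      have nI: "n \<in> I" unfolding I_def by simp
      have cardI: "card I = n + 1" unfolding I_def by simp
      have Z_meas: "Z i \<in> M \<rightarrow>\<^sub>M N" if "i \<in> I" for i
        using XY_meas that unfolding Z_def N_def I_def by simp
      have g_meas: "g \<in> borel_measurable N"
      proof -
        have "(\<lambda>p. f (fst p) (snd p)) \<in> borel_measurable N"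
          unfolding N_def
          by (rule measurable_compose_countable'[where I=UNIV and g=snd and f="\<lambda>y p. f (fst p) y"])
             (auto intro: measurable_compose[OF measurable_fst f_meas] countable_finite)
        then show ?thesis unfolding g_def by measurable
      qed
      have r_meas: "r i \<in> borel_measurable M" if "i \<in> I" for i
        unfolding r_def using measurable_compose[OF Z_meas[OF that] g_meas] by simp
      have X_meas: "X j \<in> M \<rightarrow>\<^sub>M MX" if "j \<in> I" for j
        using measurable_compose[OF Z_meas[OF that, unfolded N_def] measurable_fst]
        unfolding Z_def N_def by simp
      have e_meas: "e j \<in> borel_measurable M" if "j < n" for j
      proof -
        have jI: "j \<in> I" using that unfolding I_def by simp
        have "(\<lambda>\<omega>. 1 - (\<Sum>y\<in>s. f (X j \<omega>) y) / real (card s)) \<in> borel_measurable M" for s :: "'y set"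
          by (intro borel_measurable_diff borel_measurable_divide borel_measurable_sum borel_measurable_const
              measurable_compose[OF X_meas[OF jI] f_meas])
        then show ?thesis unfolding e_def
          by (rule measurable_compose_countable'[where I=UNIV and g="S j"])
             (auto intro: S_meas[OF that] countable_finite)
      qed
      define B where "B = (\<lambda>i. {\<omega>\<in>space M. k \<le> card {j\<in>I. r j \<omega> < r i \<omega>}})"
      have B_sets: "B i \<in> sets M" if "i \<in> I" for i
        unfolding B_def
        by (rule card_pred_sets(1)[OF fin]) (use r_meas that in measurable)
      define PN where "PN = PiM I (\<lambda>_. N)"
      define C where "C = {z\<in>space PN. k \<le> card {j\<in>I. g (z j) < g (z n)}}"
      have C_sets: "C \<in> sets PN"
        unfolding C_def
      proof (rule card_pred_sets(1)[OF fin])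
        fix j assume j: "j \<in> I"
        have "(\<lambda>z. g (z j)) \<in> borel_measurable PN" "(\<lambda>z. g (z n)) \<in> borel_measurable PN"
          unfolding PN_def using j nI
          by (auto intro!: measurable_compose[OF _ g_meas] measurable_component_singleton)
        then show "{z \<in> space PN. g (z j) < g (z n)} \<in> sets PN" by measurable
      qed
      have F_meas: "(\<lambda>\<omega>. \<lambda>j\<in>I. Z (p j) \<omega>) \<in> M \<rightarrow>\<^sub>M PN" if "p permutes I" for p
        unfolding PN_def
        by (rule measurable_restrict) (use Z_meas permutes_in_image[OF that] in auto)
      have preB: "(\<lambda>\<omega>. \<lambda>j\<in>I. Z (p j) \<omega>) -` C \<inter> space M = B (p n)" if p: "p permutes I" for p
      proof -
        have "\<omega> \<in> (\<lambda>\<omega>. \<lambda>j\<in>I. Z (p j) \<omega>) -` C \<longleftrightarrow> \<omega> \<in> B (p n)" if w: "\<omega> \<in> space M" for \<omega>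
        proof -
          have sp: "(\<lambda>j\<in>I. Z (p j) \<omega>) \<in> space PN" using measurable_space[OF F_meas[OF p] w] .
          have "{j\<in>I. g ((\<lambda>j\<in>I. Z (p j) \<omega>) j) < g ((\<lambda>j\<in>I. Z (p j) \<omega>) n)} = {j\<in>I. r (p j) \<omega> < r (p n) \<omega>}"
            using nI unfolding r_def by auto
          also have "card \<dots> = card {j\<in>I. r j \<omega> < r (p n) \<omega>}"
            by (rule card_perm[OF p, where P="\<lambda>j. r j \<omega> < r (p n) \<omega>"])
          finally show ?thesis unfolding C_def B_def using sp w by auto
        qed
        then show ?thesis unfolding B_def by auto
      qed
      have exB: "measure M (B i) = measure M (B n)" if i: "i \<in> I" for i
      proof -
        have p: "Transposition.transpose i n permutes I" using i nI by (rule permutes_swap_id)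
        have idp: "id permutes I" by (rule permutes_id)
        have "distr M PN (\<lambda>\<omega>. \<lambda>j\<in>I. Z (Transposition.transpose i n j) \<omega>) = distr M PN (\<lambda>\<omega>. \<lambda>j\<in>I. Z j \<omega>)"
          using exch p unfolding exchangeable_def PN_def N_def I_def Z_def by blast
        then have "measure (distr M PN (\<lambda>\<omega>. \<lambda>j\<in>I. Z (Transposition.transpose i n j) \<omega>)) C = measure (distr M PN (\<lambda>\<omega>. \<lambda>j\<in>I. Z (id j) \<omega>)) C"
          by simp
        then have "measure M ((\<lambda>\<omega>. \<lambda>j\<in>I. Z (Transposition.transpose i n j) \<omega>) -` C \<inter> space M) = measure M ((\<lambda>\<omega>. \<lambda>j\<in>I. Z (id j) \<omega>) -` C \<inter> space M)"
          using measure_distr[OF F_meas[OF p] C_sets] measure_distr[OF F_meas[OF idp] C_sets] by simp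
        then show ?thesis unfolding preB[OF p] preB[OF idp] by simp
      qed
      have Bsub: "B i \<subseteq> space M" for i unfolding B_def by auto
      have sumB: "(\<Sum>i\<in>I. measure M (B i)) = real (n + 1) * measure M (B n)"
        using exB cardI by simp
      have integ: "integrable M (indicator (B i) :: 'w \<Rightarrow> real)" if "i \<in> I" for i
        using B_sets[OF that] by (intro integrable_real_indicator) (auto simp: P.emeasure_finite less_top[symmetric])
      have "(\<Sum>i\<in>I. measure M (B i)) = integral\<^sup>L M (\<lambda>\<omega>. \<Sum>i\<in>I. indicator (B i) \<omega> :: real)"
        using Bochner_Integration.integral_sum[where I=I and M=M and f="\<lambda>i. indicator (B i)", OF integ] Bsub by (simp add: Int_absorb2)
      also have "\<dots> \<le> integral\<^sup>L M (\<lambda>\<omega>. real (n + 1) - real k)"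
      proof (rule integral_mono)
        show "integrable M (\<lambda>\<omega>. \<Sum>i\<in>I. indicator (B i) \<omega> :: real)"
          using integ by auto
        show "integrable M (\<lambda>\<omega>. real (n + 1) - real k)" by simp
        fix \<omega> assume w: "\<omega> \<in> space M"
        have "(\<Sum>i\<in>I. indicator (B i) \<omega> :: real) = (\<Sum>i\<in>I. of_bool (k \<le> card {j\<in>I. r j \<omega> < r i \<omega>}))"
          using w by (intro sum.cong) (auto simp: indicator_def B_def)
        also have "\<dots> = real (card (I \<inter> {i. k \<le> card {j\<in>I. r j \<omega> < r i \<omega>}}))"
          using fin by simp
        also have "I \<inter> {i. k \<le> card {j\<in>I. r j \<omega> < r i \<omega>}} = {i\<in>I. k \<le> card {j\<in>I. r j \<omega> < r i \<omega>}}" by blast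
        also have "real (card {i\<in>I. k \<le> card {j\<in>I. r j \<omega> < r i \<omega>}}) \<le> real (n + 1) - real k"
        proof (cases "{i\<in>I. k \<le> card {j\<in>I. r j \<omega> < r i \<omega>}} = {}")
          case True then show ?thesis using kn by (simp only: True card.empty)
        next
          case False
          from count_bound[OF fin False] cardI show ?thesis by simp
        qed
        finally show "(\<Sum>i\<in>I. indicator (B i) \<omega> :: real) \<le> real (n + 1) - real k" .
      qed
      also have "\<dots> = real (n + 1) - real k" by (simp add: P.prob_space)
      finally have "real (n + 1) * measure M (B n) \<le> real (n + 1) - real k" using sumB by simp
      moreover have "real (n + 1) - real k \<le> real (n + 1) * \<epsilon>" using kge by (simp add: algebra_simps)
      ultimately have "real (n + 1) * measure M (B n) \<le> real (n + 1) * \<epsilon>" by linarith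
      then have Bn: "measure M (B n) \<le> \<epsilon>" by (simp add: mult_le_cancel_left_pos)
      have T_eq: "T = {\<omega>\<in>space M. card {j\<in>{..<n}. e j \<omega> < r n \<omega>} < k}"
      proof -
        have "\<omega> \<in> T \<longleftrightarrow> \<omega> \<in> space M \<and> card {j\<in>{..<n}. e j \<omega> < r n \<omega>} < k" for \<omega>
          unfolding Tiff r_def g_def Z_def using crit_iff[OF k_def k1 kn] by simp
        then show ?thesis by auto
      qed
      have T_sets: "T \<in> sets M"
        unfolding T_eq
      proof (rule card_pred_sets(2))
        fix j assume "j \<in> {..<n}"
        then have "e j \<in> borel_measurable M" "r n \<in> borel_measurable M"
          using e_meas r_meas nI by auto
        then show "{\<omega> \<in> space M. e j \<omega> < r n \<omega>} \<in> sets M" by measurable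
      qed simp
      have "AE \<omega> in M. \<omega> \<in> space M - B n \<longrightarrow> \<omega> \<in> T"
        using cand lower
      proof eventually_elim
        case (elim \<omega>)
        show ?case
        proof
          assume w: "\<omega> \<in> space M - B n"
          have "{j\<in>{..<n}. e j \<omega> < r n \<omega>} \<subseteq> {j\<in>I. r j \<omega> < r n \<omega>}"
          proof
            fix j assume j: "j \<in> {j\<in>{..<n}. e j \<omega> < r n \<omega>}"
            then have jn: "j < n" by simp
            have "(\<Sum>z\<in>S j \<omega>. f (X j \<omega>) z) / real (card (S j \<omega>)) \<le> f (X j \<omega>) (Y j \<omega>)"
              using elim jn by (intro mean_le[OF f_nonneg f_sum]) auto
            then have "r j \<omega> \<le> e j \<omega>" unfolding r_def g_def Z_def e_def by simp
            then show "j \<in> {j\<in>I. r j \<omega> < r n \<omega>}" using j unfolding I_def by auto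
          qed
          then have "card {j\<in>{..<n}. e j \<omega> < r n \<omega>} \<le> card {j\<in>I. r j \<omega> < r n \<omega>}"
            using fin by (intro card_mono) auto
          moreover have "card {j\<in>I. r j \<omega> < r n \<omega>} < k" using w unfolding B_def by auto
          ultimately show "\<omega> \<in> T" unfolding T_eq using w by auto
        qed
      qed
      then have "measure M (space M - B n) \<le> measure M T"
        by (rule P.finite_measure_mono_AE[OF _ T_sets])
      moreover have "measure M (space M - B n) = 1 - measure M (B n)"
        using B_sets[OF nI] by (rule P.prob_compl)
      ultimately show ?thesis using Bn unfolding T_def by linarith
    qed
  qed
qed

end
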